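(* Let $M$ be the monoid (algebra in sets) generated by $a,b,d,e,f,h,i,j,k,l,n,o,p$ subject to the relations $ba=ed$, $ea=fb$, $hb=id$, $jb=kd$, $oi=pk$, $ej=ph$, $le=ek=pi$, $nf=oh=pj$. Then, for any PBW basis of the associated linear algebra (given as the normal forms of a convergent rewriting system orienting the defining relations), the partition posets associated with $M$ admit no CL-labelling making them CL-shellable, compatible with isomorphisms of subposets, and such that the minimal chains for the CL-labelling correspond to the PBW elements. In particular, the converse of the statement "a quadratic basic-set operad whose partition posets admit CL-labellings compatible with isomorphisms of subposets admits a PBW basis" is false.
   Context: For an algebra in sets (monoid) presented by generators $E$ and homogeneous relations, the partition poset $\Pi^{(d)}$ has as elements the elements of weight at most $d$ lying below some element of weight $d$, with $x\le y$ iff $y=zx$ for some $z$; covering edges are labelled by the generator multiplied on the left, and a chain read bottom-to-top gives a word read right-to-left. For $\lambda\le\omega$, $\delta_\lambda^\omega$ is the element $z$ with $\omega=z\lambda$; two interval subposets are isomorphic if there is a poset isomorphism $g$ between them with $\delta_{g(\lambda)}^{g(\omega)}=\delta_\lambda^\omega$ for every covering $\lambda\prec\omega$. A chain-edge labelling assigns to each pair (maximal chain, covering edge on it) a label in a poset, maximal chains agreeing on bottom edges having the same labels there; it is a CL-labelling if in each rooted interval there is a unique maximal chain with strictly increasing labels, lexicographically preceding all other maximal chains. CL-labellings on all $\Pi^{(d)}$ are compatible with isomorphisms of subposets if every isomorphism of subposets induces a map on labels sending increasing chains to increasing chains, non-increasing to non-increasing, and preserving the lexicographic preorder on chains. *)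

theory Defs
  imports Main
begin

datatype gen = ga | gb | gd | ge | gf | gh | gi | gj | gk | gl | gn | go | gp

type_synonym word = "gen list"

definition defrel :: "(word \<times> word) set" where
  "defrel = {([gb,ga],[ge,gd]), ([ge,ga],[gf,gb]), ([gh,gb],[gi,gd]), ([gj,gb],[gk,gd]), ([go,gi],[gp,gk]),
             ([ge,gj],[gp,gh]), ([gl,ge],[ge,gk]), ([ge,gk],[gp,gi]), ([gn,gf],[go,gh]), ([go,gh],[gp,gj])}"

definition rstep :: "(word \<times> word) set \<Rightarrow> word \<Rightarrow> word \<Rightarrow> bool" where
  "rstep R u v \<longleftrightarrow> (\<exists>x y lhs rhs. (lhs, rhs) \<in> R \<and> u = x @ lhs @ y \<and> v = x @ rhs @ y)"

definition eqw :: "word \<Rightarrow> word \<Rightarrow> bool" where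
  "eqw = (sup (rstep defrel) (rstep defrel)\<inverse>\<inverse>)\<^sup>*\<^sup>*"

type_synonym elem = "word set"

definition cls :: "word \<Rightarrow> elem" where
  "cls w = {v. eqw w v}"

definition Melems :: "elem set" where
  "Melems = range cls"

definition isprod :: "elem \<Rightarrow> elem \<Rightarrow> elem \<Rightarrow> bool" where
  "isprod z x y \<longleftrightarrow> (\<exists>u v. z = cls u \<and> x = cls v \<and> y = cls (u @ v))"

definition Mle :: "elem \<Rightarrow> elem \<Rightarrow> bool" where
  "Mle x y \<longleftrightarrow> (\<exists>z. isprod z x y)"

definition Mless :: "elem \<Rightarrow> elem \<Rightarrow> bool" where
  "Mless x y \<longleftrightarrow> Mle x y \<and> x \<noteq> y"

definition has_weight :: "elem \<Rightarrow> nat \<Rightarrow> bool" where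
  "has_weight x m \<longleftrightarrow> (\<exists>w. x = cls w \<and> length w = m)"

definition Pi :: "nat \<Rightarrow> elem set" where
  "Pi dd = {x. (\<exists>m\<le>dd. has_weight x m) \<and> (\<exists>y. has_weight y dd \<and> Mle x y)}"

definition bot :: elem where
  "bot = cls []"

definition covers :: "elem set \<Rightarrow> elem \<Rightarrow> elem \<Rightarrow> bool" where
  "covers P x y \<longleftrightarrow> x \<in> P \<and> y \<in> P \<and> Mless x y \<and> \<not> (\<exists>z\<in>P. Mless x z \<and> Mless z y)"

definition cchain :: "elem set \<Rightarrow> elem \<Rightarrow> elem \<Rightarrow> elem list \<Rightarrow> bool" where
  "cchain P x y c \<longleftrightarrow> c \<noteq> [] \<and> hd c = x \<and> last c = y \<and>
     (\<forall>q. Suc q < length c \<longrightarrow> covers P (c ! q) (c ! Suc q))"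

definition maxchain :: "elem set \<Rightarrow> elem list \<Rightarrow> bool" where
  "maxchain P c \<longleftrightarrow> c \<noteq> [] \<and> hd c \<in> P \<and> last c \<in> P \<and>
     \<not> (\<exists>z\<in>P. Mless z (hd c)) \<and> \<not> (\<exists>z\<in>P. Mless (last c) z) \<and>
     (\<forall>q. Suc q < length c \<longrightarrow> covers P (c ! q) (c ! Suc q))"

definition chain_edge_labelling :: "elem set \<Rightarrow> (elem list \<Rightarrow> nat \<Rightarrow> 'l) \<Rightarrow> bool" where
  "chain_edge_labelling P lab \<longleftrightarrow>
     (\<forall>c c' q. maxchain P c \<and> maxchain P c' \<and> Suc q < length c \<and> Suc q < length c' \<and>
        take (Suc (Suc q)) c = take (Suc (Suc q)) c' \<longrightarrow> lab c q = lab c' q)"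

text \<open>Labels of a maximal chain c of [x,y] in the rooted interval with root r
 (r a maximal chain of [bot,x]): read off any maximal chain of P extending r followed by c.\<close>
definition rlabs :: "elem set \<Rightarrow> (elem list \<Rightarrow> nat \<Rightarrow> 'l) \<Rightarrow> elem list \<Rightarrow> elem list \<Rightarrow> 'l list" where
  "rlabs P lab r c =
     (let m = (SOME m. maxchain P m \<and> take (length r + length c - 1) m = r @ tl c)
      in map (\<lambda>q. lab m (length r - 1 + q)) [0..<length c - 1])"

definition lexless :: "'l::order list \<Rightarrow> 'l list \<Rightarrow> bool" where
  "lexless s t \<longleftrightarrow> (\<exists>q < min (length s) (length t). take q s = take q t \<and> s ! q < t ! q)"

definition lexle :: "'l::order list \<Rightarrow> 'l list \<Rightarrow> bool" where
  "lexle s t \<longleftrightarrow> s = t \<or> lexless s t"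

definition increasing :: "'l::order list \<Rightarrow> bool" where
  "increasing s \<longleftrightarrow> sorted_wrt (<) s"

definition CL_labelling :: "elem set \<Rightarrow> (elem list \<Rightarrow> nat \<Rightarrow> 'l::order) \<Rightarrow> bool" where
  "CL_labelling P lab \<longleftrightarrow> chain_edge_labelling P lab \<and>
     (\<forall>x y r. x \<in> P \<and> y \<in> P \<and> Mle x y \<and> cchain P bot x r \<longrightarrow>
        (\<exists>!c. cchain P x y c \<and> increasing (rlabs P lab r c)) \<and>
        (\<forall>c c'. cchain P x y c \<and> increasing (rlabs P lab r c) \<and> cchain P x y c' \<and> c' \<noteq> c
            \<longrightarrow> lexless (rlabs P lab r c) (rlabs P lab r c')))"

definition interval :: "elem set \<Rightarrow> elem \<Rightarrow> elem \<Rightarrow> elem set" where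
  "interval P x y = {z \<in> P. Mle x z \<and> Mle z y}"

text \<open>g is an isomorphism of interval subposets [x,y] of P onto [x',y'] of P', preserving
 \<delta> on every covering (the set of z with \<omega> = z\<lambda> is preserved).\<close>
definition subposet_iso ::
  "elem set \<Rightarrow> elem \<Rightarrow> elem \<Rightarrow> elem set \<Rightarrow> elem \<Rightarrow> elem \<Rightarrow> (elem \<Rightarrow> elem) \<Rightarrow> bool" where
  "subposet_iso P x y P' x' y' g \<longleftrightarrow>
     bij_betw g (interval P x y) (interval P' x' y') \<and>
     (\<forall>u\<in>interval P x y. \<forall>v\<in>interval P x y. Mle u v \<longleftrightarrow> Mle (g u) (g v)) \<and>
     (\<forall>u\<in>interval P x y. \<forall>v\<in>interval P x y. covers P u v \<longrightarrow>
        (\<forall>z. isprod z u v \<longleftrightarrow> isprod z (g u) (g v)))"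

definition compatible_isos :: "(nat \<Rightarrow> elem list \<Rightarrow> nat \<Rightarrow> 'l::order) \<Rightarrow> bool" where
  "compatible_isos lab \<longleftrightarrow>
     (\<forall>dd dd' x y x' y' g r r'.
        x \<in> Pi dd \<and> y \<in> Pi dd \<and> Mle x y \<and> x' \<in> Pi dd' \<and> y' \<in> Pi dd' \<and> Mle x' y' \<and>
        subposet_iso (Pi dd) x y (Pi dd') x' y' g \<and>
        cchain (Pi dd) bot x r \<and> cchain (Pi dd') bot x' r' \<longrightarrow>
        (\<forall>c. cchain (Pi dd) x y c \<longrightarrow>
           (increasing (rlabs (Pi dd) (lab dd) r c) \<longleftrightarrow>
            increasing (rlabs (Pi dd') (lab dd') r' (map g c)))) \<and>
        (\<forall>c1 c2. cchain (Pi dd) x y c1 \<and> cchain (Pi dd) x y c2 \<longrightarrow>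
           lexle (rlabs (Pi dd) (lab dd) r c1) (rlabs (Pi dd) (lab dd) r c2) \<longrightarrow>
           lexle (rlabs (Pi dd') (lab dd') r' (map g c1)) (rlabs (Pi dd') (lab dd') r' (map g c2))))"

definition convergent_orientation :: "(word \<times> word) set \<Rightarrow> bool" where
  "convergent_orientation R \<longleftrightarrow>
     (\<forall>(x, y)\<in>R. length x = 2 \<and> length y = 2 \<and> x \<noteq> y \<and> eqw x y) \<and>
     (sup (rstep R) (rstep R)\<inverse>\<inverse>)\<^sup>*\<^sup>* = eqw \<and>
     wfP (rstep R)\<inverse>\<inverse> \<and>
     (\<forall>u v w. (rstep R)\<^sup>*\<^sup>* u v \<and> (rstep R)\<^sup>*\<^sup>* u w \<longrightarrow>
        (\<exists>t. (rstep R)\<^sup>*\<^sup>* v t \<and> (rstep R)\<^sup>*\<^sup>* w t))"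

definition irreducible :: "(word \<times> word) set \<Rightarrow> word \<Rightarrow> bool" where
  "irreducible R w \<longleftrightarrow> \<not> (\<exists>v. rstep R w v)"

text \<open>The maximal chain of [bot, cls w] associated with the word w: the word read right to left
 from bottom to top, i.e. the chain of its suffixes.\<close>
definition word_chain :: "word \<Rightarrow> elem list" where
  "word_chain w = map (\<lambda>q. cls (drop (length w - q) w)) [0..<Suc (length w)]"

definition minimal_chains_PBW :: "(word \<times> word) set \<Rightarrow> (nat \<Rightarrow> elem list \<Rightarrow> nat \<Rightarrow> 'l::order) \<Rightarrow> bool" where
  "minimal_chains_PBW R lab \<longleftrightarrow>
     (\<forall>dd w. length w = dd \<and> irreducible R w \<longrightarrow>
        increasing (rlabs (Pi dd) (lab dd) [bot] (word_chain w)))"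

end

theory Submission
  imports Defs
begin


lemma len2: assumes "length xs = 2" shows "xs = [xs!0, xs!1]"
proof (rule nth_equalityI)
  show "length xs = length [xs!0, xs!1]" using assms by simp
  fix i assume "i < length xs"
  then have "i = 0 \<or> i = 1" using assms by auto
  then show "xs ! i = [xs!0, xs!1] ! i" by auto
qed

lemma len1: assumes "length xs = 1" shows "xs = [xs!0]"
proof (rule nth_equalityI)
  show "length xs = length [xs!0]" using assms by simp
  fix i assume "i < length xs"
  then have "i = 0" using assms by auto
  then show "xs ! i = [xs!0] ! i" by auto
qed

lemma rstep_len: "(\<forall>(l,r)\<in>D. length l = length r) \<Longrightarrow> rstep D u v \<Longrightarrow> length u = length v"
  unfolding rstep_def by fastforce

lemma defrel_len: "\<forall>(l,r)\<in>defrel. length l = 2 \<and> length r = 2"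
  by (auto simp: defrel_def)

lemma eqw_len: "eqw u v \<Longrightarrow> length u = length v"
  unfolding eqw_def
proof (induction rule: rtranclp_induct)
  case base then show ?case by simp
next
  case (step y z)
  have L: "\<forall>(l,r)\<in>defrel. length l = length r" using defrel_len by auto
  from step(2) have "length y = length z"
    using rstep_len[OF L, of y z] rstep_len[OF L, of z y] by auto
  with step(3) show ?case by simp
qed

lemma eqw_refl: "eqw u u" unfolding eqw_def by simp

lemma eqw_sym: "eqw u v \<Longrightarrow> eqw v u"
  unfolding eqw_def
proof (induction rule: rtranclp_induct)
  case base then show ?case by simp
next
  case (step y z)
  then have "(sup (rstep defrel) (rstep defrel)\<inverse>\<inverse>) z y" by auto
  then show ?case using step(3) by (meson converse_rtranclp_into_rtranclp)
qed

lemma eqw_trans: "eqw u v \<Longrightarrow> eqw v w \<Longrightarrow> eqw u w"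
  unfolding eqw_def by (rule rtranclp_trans)

lemma cls_eq_iff: "cls u = cls v \<longleftrightarrow> eqw u v"
proof
  assume "cls u = cls v"
  then have "v \<in> cls u" using eqw_refl by (auto simp: cls_def)
  then show "eqw u v" by (simp add: cls_def)
next
  assume "eqw u v"
  then show "cls u = cls v" unfolding cls_def using eqw_sym eqw_trans by blast
qed

lemma cls_len: "cls u = cls v \<Longrightarrow> length u = length v"
  using cls_eq_iff eqw_len by blast

lemma Mle_cls: "Mle (cls u) (cls v) \<Longrightarrow> length u \<le> length v \<and> (length u = length v \<longrightarrow> cls u = cls v)"
proof -
  assume "Mle (cls u) (cls v)"
  then obtain u' v' where a: "cls u = cls v'" and b: "cls v = cls (u' @ v')"
    unfolding Mle_def isprod_def by blast
  from a have "length u = length v'" by (rule cls_len)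
  moreover from b have "length v = length (u' @ v')" by (rule cls_len)
  then have lv: "length v = length u' + length v'" by simp
  moreover have "length u = length v \<Longrightarrow> cls u = cls v"
  proof -
    assume "length u = length v"
    then have "u' = []" using lv calculation(1) by simp
    then show "cls u = cls v" using a b by simp
  qed
  ultimately show ?thesis by auto
qed

lemma Mless_cls: "Mless (cls u) (cls v) \<Longrightarrow> length u < length v"
  using Mle_cls unfolding Mless_def by fastforce

lemma Pi2_elem: "z \<in> Pi 2 \<Longrightarrow> \<exists>w. z = cls w \<and> length w \<le> 2"
  unfolding Pi_def has_weight_def by auto

lemma Mle_prod: "Mle (cls v) (cls (u @ v))"
  unfolding Mle_def isprod_def by blast

lemma bot_cls: "bot = cls []" by (simp add: bot_def)

lemma cls1_in: "cls [y] \<in> Pi 2"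
  unfolding Pi_def has_weight_def
  using Mle_prod[of "[y]" "[y]"] by (auto intro!: exI[of _ "cls [y,y]"] exI[of _ 1])

lemma cls2_in: "length w = 2 \<Longrightarrow> cls w \<in> Pi 2"
  unfolding Pi_def has_weight_def
  using Mle_prod[of w "[]"] by auto

lemma bot_in: "bot \<in> Pi 2"
  unfolding Pi_def has_weight_def bot_def
  using Mle_prod[of "[]" "[ga,ga]"] by (auto intro!: exI[of _ "cls [ga,ga]"])

lemma cls_neq_len: "length u \<noteq> length v \<Longrightarrow> cls u \<noteq> cls v"
  using cls_len by blast

lemma covers_step:
  assumes "cls u \<in> Pi 2" "cls v \<in> Pi 2" "length v = Suc (length u)" "Mle (cls u) (cls v)"
  shows "covers (Pi 2) (cls u) (cls v)"
  unfolding covers_def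
proof (intro conjI)
  show "Mless (cls u) (cls v)" using assms cls_neq_len unfolding Mless_def by auto
  show "\<not> (\<exists>z\<in>Pi 2. Mless (cls u) z \<and> Mless z (cls v))"
  proof
    assume "\<exists>z\<in>Pi 2. Mless (cls u) z \<and> Mless z (cls v)"
    then obtain w where "Mless (cls u) (cls w)" "Mless (cls w) (cls v)"
      using Pi2_elem by blast
    then have "length u < length w" "length w < length v" using Mless_cls by auto
    then show False using assms(3) by auto
  qed
qed (use assms in auto)

lemma word_chain2: "word_chain [x,y] = [bot, cls [y], cls [x,y]]"
  by (simp add: word_chain_def upt_rec bot_def)

lemma maxchain2: "maxchain (Pi 2) [bot, cls [y], cls [x,y]]"
proof -
  have c1: "covers (Pi 2) (cls []) (cls [y])"
    by (rule covers_step) (use cls1_in bot_in bot_def Mle_prod[of "[]" "[y]", simplified] in auto)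
  have c2: "covers (Pi 2) (cls [y]) (cls [x,y])"
    by (rule covers_step) (use cls1_in cls2_in Mle_prod[of "[y]" "[x]"] in auto)
  have f1: "\<forall>q. Suc q < 3 \<longrightarrow> covers (Pi 2) ([bot, cls [y], cls [x,y]] ! q) ([bot, cls [y], cls [x,y]] ! Suc q)"
  proof (intro allI impI)
    fix q assume "Suc q < 3"
    then have "q = 0 \<or> q = 1" by auto
    then show "covers (Pi 2) ([bot, cls [y], cls [x,y]] ! q) ([bot, cls [y], cls [x,y]] ! Suc q)"
      using c1 c2 bot_def by auto
  qed
  have f2: "\<not> (\<exists>z\<in>Pi 2. Mless z bot)"
  proof
    assume "\<exists>z\<in>Pi 2. Mless z bot"
    then obtain w where "Mless (cls w) (cls [])" using Pi2_elem bot_def by metis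
    then show False using Mless_cls by fastforce
  qed
  have f3: "\<not> (\<exists>z\<in>Pi 2. Mless (cls [x,y]) z)"
    using Pi2_elem Mless_cls by fastforce
  show ?thesis unfolding maxchain_def
  proof (intro conjI)
    show "\<not> (\<exists>z\<in>Pi 2. Mless z (hd [bot, cls [y], cls [x,y]]))" using f2 by (simp only: list.sel not_False_eq_True)
    show "\<not> (\<exists>z\<in>Pi 2. Mless (last [bot, cls [y], cls [x,y]]) z)" using f3 by (metis last_ConsR last_ConsL list.distinct(1))
    show "\<forall>q. Suc q < length [bot, cls [y], cls [x,y]] \<longrightarrow> covers (Pi 2) ([bot, cls [y], cls [x,y]] ! q) ([bot, cls [y], cls [x,y]] ! Suc q)"
      using f1 by (simp only: list.size add_0 add_0_right One_nat_def numeral_3_eq_3 add_Suc_right)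
    show "[bot, cls [y], cls [x,y]] \<noteq> []" by simp
    show "hd [bot, cls [y], cls [x,y]] \<in> Pi 2" using bot_in by simp
    show "last [bot, cls [y], cls [x,y]] \<in> Pi 2" using cls2_in[of "[x,y]"] by simp
  qed
qed

lemma cchain2: "cchain (Pi 2) bot (cls [x,y]) [bot, cls [y], cls [x,y]]"
proof -
  have A: "\<forall>q. Suc q < length [bot, cls [y], cls [x,y]] \<longrightarrow> covers (Pi 2) ([bot, cls [y], cls [x,y]] ! q) ([bot, cls [y], cls [x,y]] ! Suc q)"
    using maxchain2[of y x] unfolding maxchain_def by (elim conjE)
  show ?thesis unfolding cchain_def
  proof (intro conjI)
    show "\<forall>q. Suc q < length [bot, cls [y], cls [x,y]] \<longrightarrow> covers (Pi 2) ([bot, cls [y], cls [x,y]] ! q) ([bot, cls [y], cls [x,y]] ! Suc q)"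
      by (rule A)
  qed simp_all
qed



lemma rstep_short: "(\<forall>(l,r)\<in>D. length l = 2) \<Longrightarrow> rstep D u v \<Longrightarrow> length u \<ge> 2"
  unfolding rstep_def by fastforce

lemma rstep_short2: "(\<forall>(l,r)\<in>D. length r = 2) \<Longrightarrow> rstep D u v \<Longrightarrow> length v \<ge> 2"
  unfolding rstep_def by fastforce

lemma eqw_single: "eqw [y] v \<Longrightarrow> v = [y]"
  unfolding eqw_def
proof (induction rule: rtranclp_induct)
  case base then show ?case by simp
next
  case (step a b)
  have L: "\<forall>(l,r)\<in>defrel. length l = 2" "\<forall>(l,r)\<in>defrel. length r = 2" using defrel_len by auto
  from step(2,3) show ?case using rstep_short[OF L(1), of "[y]" b] rstep_short2[OF L(2), of b "[y]"]
    by auto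
qed

lemma cls_single_neq: "y1 \<noteq> y2 \<Longrightarrow> cls [y1] \<noteq> cls [y2]"
  using cls_eq_iff eqw_single by blast

lemma rl_len: "length (rlabs P L r c) = length c - 1"
  by (simp add: rlabs_def Let_def)

lemma rl_nth0: "rlabs (Pi 2) L [bot] (word_chain [x,y]) ! 0 =
   L (SOME m. maxchain (Pi 2) m \<and> take 3 m = [bot, cls [y], cls [x,y]]) 0"
  by (simp add: rlabs_def word_chain2 Let_def numeral_3_eq_3)

lemma some_chain:
  "maxchain (Pi 2) (SOME m. maxchain (Pi 2) m \<and> take 3 m = [bot, cls [y], cls [x,y]]) \<and>
   take 3 (SOME m. maxchain (Pi 2) m \<and> take 3 m = [bot, cls [y], cls [x,y]]) = [bot, cls [y], cls [x,y]]"
  by (rule someI[of _ "[bot, cls [y], cls [x,y]]"]) (simp add: maxchain2)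

lemma first_label_eq:
  assumes "chain_edge_labelling (Pi 2) L"
  shows "rlabs (Pi 2) L [bot] (word_chain [x,y]) ! 0 = rlabs (Pi 2) L [bot] (word_chain [x',y]) ! 0"
proof -
  define m where "m = (SOME m. maxchain (Pi 2) m \<and> take 3 m = [bot, cls [y], cls [x,y]])"
  define m' where "m' = (SOME m. maxchain (Pi 2) m \<and> take 3 m = [bot, cls [y], cls [x',y]])"
  have a: "maxchain (Pi 2) m" "take 3 m = [bot, cls [y], cls [x,y]]" using some_chain m_def by auto
  have b: "maxchain (Pi 2) m'" "take 3 m' = [bot, cls [y], cls [x',y]]" using some_chain m'_def by auto
  have "length (take 3 m) = 3" using a(2) by simp
  then have la: "length m \<ge> 3" by simp
  have "length (take 3 m') = 3" using b(2) by simp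
  then have lb: "length m' \<ge> 3" by simp
  have "take 2 m = take 2 (take 3 m)" by simp
  also have "\<dots> = [bot, cls [y]]" using a(2) by simp
  also have "\<dots> = take 2 (take 3 m')" using b(2) by simp
  also have "\<dots> = take 2 m'" by simp
  finally have t: "take (Suc (Suc 0)) m = take (Suc (Suc 0)) m'" by (simp add: numeral_2_eq_2)
  have s: "Suc 0 < length m" "Suc 0 < length m'" using la lb by auto
  have "L m 0 = L m' 0"
    using assms a(1) b(1) s t unfolding chain_edge_labelling_def by blast
  then show ?thesis unfolding rl_nth0 m_def m'_def .
qed

lemma key_label:
  fixes L :: "elem list \<Rightarrow> nat \<Rightarrow> 'l::order"
  assumes CL: "CL_labelling (Pi 2) L"
    and eq: "eqw [x1,y1] [x2,y2]" and ne: "y1 \<noteq> y2"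
    and inc: "increasing (rlabs (Pi 2) L [bot] (word_chain [x1,y1]))"
  shows "rlabs (Pi 2) L [bot] (word_chain [x1,y1]) ! 0 < rlabs (Pi 2) L [bot] (word_chain [x2,y2]) ! 0"
proof -
  define c0 where "c0 = word_chain [x1,y1]"
  define c1 where "c1 = word_chain [x2,y2]"
  have ceq: "cls [x2,y2] = cls [x1,y1]" using eq cls_eq_iff by metis
  have ch0: "cchain (Pi 2) bot (cls [x1,y1]) c0" unfolding c0_def word_chain2 by (rule cchain2)
  have ch1: "cchain (Pi 2) bot (cls [x1,y1]) c1" unfolding c1_def word_chain2 using cchain2[of x2 y2] ceq by simp
  have neq: "c1 \<noteq> c0" unfolding c0_def c1_def word_chain2 using cls_single_neq[OF ne] by auto
  have r: "cchain (Pi 2) bot bot [bot]" by (simp add: cchain_def)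
  have mle: "Mle bot (cls [x1,y1])" using Mle_prod[of "[]" "[x1,y1]"] by (simp add: bot_def)
  from CL have U: "\<exists>!c. cchain (Pi 2) bot (cls [x1,y1]) c \<and> increasing (rlabs (Pi 2) L [bot] c)"
    and LX: "\<forall>c c'. cchain (Pi 2) bot (cls [x1,y1]) c \<and> increasing (rlabs (Pi 2) L [bot] c) \<and>
        cchain (Pi 2) bot (cls [x1,y1]) c' \<and> c' \<noteq> c \<longrightarrow> lexless (rlabs (Pi 2) L [bot] c) (rlabs (Pi 2) L [bot] c')"
    unfolding CL_labelling_def using bot_in cls2_in[of "[x1,y1]"] mle r by auto
  define s where "s = rlabs (Pi 2) L [bot] c0"
  define t where "t = rlabs (Pi 2) L [bot] c1"
  have ls: "length s = 2" unfolding s_def rl_len c0_def word_chain2 by simp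
  have lt: "length t = 2" unfolding t_def rl_len c1_def word_chain2 by simp
  obtain s0 s1 where s: "s = [s0,s1]" using len2[OF ls] by blast
  obtain t0 t1 where t: "t = [t0,t1]" using len2[OF lt] by blast
  have incs: "s0 < s1" using inc s unfolding s_def c0_def increasing_def by simp
  have lx: "lexless s t" using LX ch0 ch1 neq inc unfolding s_def t_def c0_def by blast
  then obtain q where q: "q < 2" "take q s = take q t" "s ! q < t ! q"
    unfolding lexless_def using ls lt by auto
  show ?thesis
  proof (cases "q = 0")
    case True then show ?thesis using q s t unfolding s_def t_def c0_def c1_def by simp
  next
    case False
    then have "q = 1" using q by auto
    then have "s0 = t0" "s1 < t1" using q s t by auto
    then have "t0 < t1" using incs by (metis less_trans)
    then have "increasing (rlabs (Pi 2) L [bot] c1)" using t unfolding t_def increasing_def by simp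
    then have "c1 = c0" using U ch0 ch1 inc unfolding c0_def by blast
    then show ?thesis using neq by simp
  qed
qed



lemma rstep2_l: "(\<forall>(l,r)\<in>D. length l = 2) \<Longrightarrow> rstep D [p,q] v \<Longrightarrow> ([p,q],v) \<in> D"
  unfolding rstep_def
proof (elim exE conjE)
  fix x y lhs rhs
  assume L: "\<forall>(l,r)\<in>D. length l = 2" and m: "(lhs, rhs) \<in> D" and u: "[p,q] = x @ lhs @ y" and v: "v = x @ rhs @ y"
  have "length lhs = 2" using L m by auto
  moreover have "length [p,q] = length x + length lhs + length y" using u by simp
  ultimately have "x = [] \<and> y = []" by simp
  then show "([p,q],v) \<in> D" using u v m by simp
qed

lemma rstep2_r: "(\<forall>(l,r)\<in>D. length r = 2) \<Longrightarrow> rstep D v [p,q] \<Longrightarrow> (v,[p,q]) \<in> D"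
  unfolding rstep_def
proof (elim exE conjE)
  fix x y lhs rhs
  assume L: "\<forall>(l,r)\<in>D. length r = 2" and m: "(lhs, rhs) \<in> D" and u: "[p,q] = x @ rhs @ y" and v: "v = x @ lhs @ y"
  have "length rhs = 2" using L m by auto
  moreover have "length [p,q] = length x + length rhs + length y" using u by simp
  ultimately have "x = [] \<and> y = []" by simp
  then show "(v,[p,q]) \<in> D" using u v m by simp
qed

lemma eqw_closed:
  assumes cl: "\<And>u v. u \<in> S \<Longrightarrow> rstep defrel u v \<or> rstep defrel v u \<Longrightarrow> v \<in> S"
    and "u \<in> S" and "eqw u v"
  shows "v \<in> S"
  using assms(3,2) unfolding eqw_def
  by (induction rule: rtranclp_induct) (use cl in auto)

lemma eqw_closed2:
  assumes cl: "\<And>p q v. [p,q] \<in> S \<Longrightarrow> ([p,q],v) \<in> defrel \<or> (v,[p,q]) \<in> defrel \<Longrightarrow> v \<in> S"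
    and S2: "\<forall>w\<in>S. length w = 2"
    and "w \<in> S" and "eqw w v"
  shows "v \<in> S"
proof (rule eqw_closed[OF _ assms(3,4)])
  fix u v assume u: "u \<in> S" and st: "rstep defrel u v \<or> rstep defrel v u"
  obtain p q where pq: "u = [p,q]" using S2 u len2 by blast
  have L1: "\<forall>(l,r)\<in>defrel. length l = 2" and L2: "\<forall>(l,r)\<in>defrel. length r = 2" using defrel_len by auto
  from st have "([p,q],v) \<in> defrel \<or> (v,[p,q]) \<in> defrel"
    using rstep2_l[OF L1] rstep2_r[OF L2] pq by blast
  then show "v \<in> S" using cl u pq by blast
qed

lemma eqw_free2:
  assumes "\<forall>v. ([p,q],v) \<notin> defrel \<and> (v,[p,q]) \<notin> defrel" and "eqw [p,q] v"
  shows "v = [p,q]"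
  using eqw_closed2[of "{[p,q]}" "[p,q]" v] assms by auto

lemma eqw_ctx_step:
  assumes "(l,r) \<in> defrel \<or> (r,l) \<in> defrel"
  shows "eqw (x @ l @ y) (x @ r @ y)"
proof -
  have "rstep defrel (x @ l @ y) (x @ r @ y) \<or> rstep defrel (x @ r @ y) (x @ l @ y)"
    using assms unfolding rstep_def by blast
  then show ?thesis unfolding eqw_def by auto
qed

lemma eqwL: "([p,q],[p',q']) \<in> defrel \<or> ([p',q'],[p,q]) \<in> defrel \<Longrightarrow> eqw [p,q,r] [p',q',r]"
  using eqw_ctx_step[of "[p,q]" "[p',q']" "[]" "[r]"] by simp

lemma eqwR: "([p,q],[p',q']) \<in> defrel \<or> ([p',q'],[p,q]) \<in> defrel \<Longrightarrow> eqw [r,p,q] [r,p',q']"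
  using eqw_ctx_step[of "[p,q]" "[p',q']" "[r]" "[]"] by simp

lemma eqw2: "([p,q],[p',q']) \<in> defrel \<or> ([p',q'],[p,q]) \<in> defrel \<Longrightarrow> eqw [p,q] [p',q']"
  using eqw_ctx_step[of "[p,q]" "[p',q']" "[]" "[]"] by simp

section \<open>Consequences of convergence\<close>

context
  fixes R :: "(word \<times> word) set"
  assumes conv: "convergent_orientation R"
begin

lemma conv_rules: "(l,r) \<in> R \<Longrightarrow> length l = 2 \<and> length r = 2 \<and> l \<noteq> r \<and> eqw l r"
  using conv unfolding convergent_orientation_def by blast

lemma conv_eq: "(sup (rstep R) (rstep R)\<inverse>\<inverse>)\<^sup>*\<^sup>* = eqw"
  using conv unfolding convergent_orientation_def by blast

lemma conv_rtr_eqw: "(rstep R)\<^sup>*\<^sup>* u v \<Longrightarrow> eqw u v"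
proof -
  assume "(rstep R)\<^sup>*\<^sup>* u v"
  then have "(sup (rstep R) (rstep R)\<inverse>\<inverse>)\<^sup>*\<^sup>* u v"
    by (rule rtranclp_mono[THEN predicate2D, rotated]) auto
  then show ?thesis using conv_eq by simp
qed

lemma conv_nf: "\<exists>v. eqw w v \<and> irreducible R v"
proof -
  have wf: "wfP (rstep R)\<inverse>\<inverse>" using conv unfolding convergent_orientation_def by blast
  have "\<exists>v. (rstep R)\<^sup>*\<^sup>* w v \<and> irreducible R v"
    using wf
  proof (induction w rule: wfp_induct_rule)
    case (less w)
    show ?case
    proof (cases "irreducible R w")
      case True then show ?thesis by blast
    next
      case False
      then obtain w' where "rstep R w w'" unfolding irreducible_def by blast
      with less obtain v where "(rstep R)\<^sup>*\<^sup>* w' v \<and> irreducible R v" by blast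
      then show ?thesis using \<open>rstep R w w'\<close> by (meson converse_rtranclp_into_rtranclp)
    qed
  qed
  then show ?thesis using conv_rtr_eqw by blast
qed

lemma conv_join: "eqw u v \<Longrightarrow> \<exists>t. (rstep R)\<^sup>*\<^sup>* u t \<and> (rstep R)\<^sup>*\<^sup>* v t"
proof -
  have cf: "\<And>u v w. (rstep R)\<^sup>*\<^sup>* u v \<Longrightarrow> (rstep R)\<^sup>*\<^sup>* u w \<Longrightarrow> \<exists>t. (rstep R)\<^sup>*\<^sup>* v t \<and> (rstep R)\<^sup>*\<^sup>* w t"
    using conv unfolding convergent_orientation_def by blast
  assume "eqw u v"
  then have "(sup (rstep R) (rstep R)\<inverse>\<inverse>)\<^sup>*\<^sup>* u v" using conv_eq by simp
  then show ?thesis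
  proof (induction rule: rtranclp_induct)
    case base then show ?case by blast
  next
    case (step y z)
    then obtain t where t: "(rstep R)\<^sup>*\<^sup>* u t" "(rstep R)\<^sup>*\<^sup>* y t" by blast
    from step(2) show ?case
    proof
      assume "rstep R y z"
      then obtain t' where "(rstep R)\<^sup>*\<^sup>* t t'" "(rstep R)\<^sup>*\<^sup>* z t'" using cf[OF t(2), of z] by blast
      then show ?thesis using t(1) by (meson rtranclp_trans)
    next
      assume "(rstep R)\<inverse>\<inverse> y z"
      then have "(rstep R)\<^sup>*\<^sup>* z t" using t(2) by (meson converse_rtranclp_into_rtranclp conversepD)
      then show ?thesis using t(1) by blast
    qed
  qed
qed

lemma irr_rtr: "irreducible R u \<Longrightarrow> (rstep R)\<^sup>*\<^sup>* u t \<Longrightarrow> t = u"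
  unfolding irreducible_def by (metis converse_rtranclpE)

lemma conv_unique: "eqw u v \<Longrightarrow> irreducible R u \<Longrightarrow> irreducible R v \<Longrightarrow> u = v"
  using conv_join irr_rtr by metis

lemma irr_free2:
  assumes "\<forall>v. ([p,q],v) \<notin> defrel \<and> (v,[p,q]) \<notin> defrel"
  shows "irreducible R [p,q]"
proof -
  have L: "\<forall>(l,r)\<in>R. length l = 2" using conv_rules by auto
  { fix v assume "rstep R [p,q] v"
    then have "([p,q],v) \<in> R" by (rule rstep2_l[OF L])
    then have "[p,q] \<noteq> v" "eqw [p,q] v" using conv_rules by auto
    then have False using eqw_free2[OF assms] by auto }
  then show ?thesis unfolding irreducible_def by blast
qed

lemma irr3:
  assumes "irreducible R [x,y]" "irreducible R [y,z]"
  shows "irreducible R [x,y,z]"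
proof -
  { fix v assume "rstep R [x,y,z] v"
    then obtain a b lhs rhs where m: "(lhs,rhs) \<in> R" and u: "[x,y,z] = a @ lhs @ b" and v: "v = a @ rhs @ b"
      unfolding rstep_def by blast
    have l2: "length lhs = 2" using conv_rules m by auto
    then obtain l1 l2 where lhs: "lhs = [l1,l2]" using len2 by blast
    have "length [x,y,z] = length a + length lhs + length b" using u by simp
    then have "length a + length b = 1" using l2 by simp
    then have "(a = [] \<and> length b = 1) \<or> (length a = 1 \<and> b = [])" by (auto simp: add_is_1)
    then have "(a = [] \<and> lhs = [x,y] \<and> b = [z]) \<or> (a = [x] \<and> lhs = [y,z] \<and> b = [])"
    proof
      assume "a = [] \<and> length b = 1"
      then obtain b1 where "a = []" "b = [b1]" using len1 by blast
      then show ?thesis using u unfolding lhs by simp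
    next
      assume "length a = 1 \<and> b = []"
      then obtain a1 where "a = [a1]" "b = []" using len1 by blast
      then show ?thesis using u unfolding lhs by simp
    qed
    then have False
    proof
      assume "a = [] \<and> lhs = [x,y] \<and> b = [z]"
      then have "rstep R [x,y] rhs" unfolding rstep_def using m by (metis append_Nil append_Nil2)
      then show False using assms(1) unfolding irreducible_def by blast
    next
      assume "a = [x] \<and> lhs = [y,z] \<and> b = []"
      then have "rstep R [y,z] rhs" unfolding rstep_def using m by (metis append_Nil append_Nil2)
      then show False using assms(2) unfolding irreducible_def by blast
    qed }
  then show ?thesis unfolding irreducible_def by blast
qed

lemma class2:
  assumes "\<And>p q v. [p,q] \<in> S \<Longrightarrow> ([p,q],v) \<in> defrel \<or> (v,[p,q]) \<in> defrel \<Longrightarrow> v \<in> S"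
    and "\<forall>w\<in>S. length w = 2" and "w \<in> S"
  shows "\<exists>v\<in>S. irreducible R v"
proof -
  obtain v where v: "eqw w v" "irreducible R v" using conv_nf by blast
  have "v \<in> S" using eqw_closed2[of S w v] assms(1) assms(2) assms(3) v(1) by blast
  then show ?thesis using v(2) by blast
qed

end



lemma eq_hed_ida: "eqw [gh,ge,gd] [gi,gd,ga]"
  by (rule eqw_trans[OF eqwR eqwL]) (simp_all add: defrel_def)

lemma eq_nea_oid: "eqw [gn,ge,ga] [go,gi,gd]"
  by (rule eqw_trans[OF eqwR eqw_trans[OF eqwL eqwR]]) (simp_all add: defrel_def)

lemma eq_nea_pkd: "eqw [gn,ge,ga] [gp,gk,gd]"
  by (rule eqw_trans[OF eq_nea_oid eqwL]) (simp_all add: defrel_def)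

lemma eq_lba_led: "eqw [gl,gb,ga] [gl,ge,gd]"
  by (rule eqwR) (simp add: defrel_def)

lemma eq_led_ejb: "eqw [gl,ge,gd] [ge,gj,gb]"
  by (rule eqw_trans[OF eqwL eqwR]) (simp_all add: defrel_def)

lemma eq_ejb_phb: "eqw [ge,gj,gb] [gp,gh,gb]"
  by (rule eqwL) (simp add: defrel_def)

lemma eq_eka_lfb: "eqw [ge,gk,ga] [gl,gf,gb]"
  by (rule eqw_trans[OF eqwL eqwR]) (simp_all add: defrel_def)

lemma eq_pia_eka: "eqw [gp,gi,ga] [ge,gk,ga]"
  by (rule eqwL) (simp add: defrel_def)

lemma part2:
  fixes L :: "elem list \<Rightarrow> nat \<Rightarrow> 'l::order"
  assumes conv: "convergent_orientation R" and CL: "CL_labelling (Pi 2) L"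
    and pbw: "\<And>w. length w = 2 \<Longrightarrow> irreducible R w \<Longrightarrow> increasing (rlabs (Pi 2) L [bot] (word_chain w))"
  shows False
proof -
  define F where "F y = rlabs (Pi 2) L [bot] (word_chain [ga,y]) ! 0" for y
  have cel: "chain_edge_labelling (Pi 2) L" using CL unfolding CL_labelling_def by blast
  have ordF: "F y1 < F y2" if a: "eqw [x1,y1] [x2,y2]" "y1 \<noteq> y2" "irreducible R [x1,y1]" for x1 y1 x2 y2
  proof -
    have "rlabs (Pi 2) L [bot] (word_chain [x1,y1]) ! 0 < rlabs (Pi 2) L [bot] (word_chain [x2,y2]) ! 0"
      by (rule key_label[OF CL a(1) a(2) pbw[OF _ a(3)]]) simp
    then show "F y1 < F y2" unfolding F_def
      using first_label_eq[OF cel, of x1 y1 ga] first_label_eq[OF cel, of x2 y2 ga] by simp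
  qed
  have e_ba: "eqw [gb,ga] [ge,gd]" by (rule eqw2) (simp add: defrel_def)
  have e_ea: "eqw [ge,ga] [gf,gb]" by (rule eqw2) (simp add: defrel_def)
  have e_hb: "eqw [gh,gb] [gi,gd]" by (rule eqw2) (simp add: defrel_def)
  have e_jb: "eqw [gj,gb] [gk,gd]" by (rule eqw2) (simp add: defrel_def)
  have o1: "F ga < F gd" if "irreducible R [gb,ga]" using ordF[OF e_ba _ that] by simp
  have o2: "F gd < F ga" if "irreducible R [ge,gd]" using ordF[OF eqw_sym[OF e_ba] _ that] by simp
  have o3: "F ga < F gb" if "irreducible R [ge,ga]" using ordF[OF e_ea _ that] by simp
  have o4: "F gb < F ga" if "irreducible R [gf,gb]" using ordF[OF eqw_sym[OF e_ea] _ that] by simp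
  have o5: "F gb < F gd" if "irreducible R [gh,gb]" using ordF[OF e_hb _ that] by simp
  have o6: "F gd < F gb" if "irreducible R [gi,gd]" using ordF[OF eqw_sym[OF e_hb] _ that] by simp
  have o7: "F gb < F gd" if "irreducible R [gj,gb]" using ordF[OF e_jb _ that] by simp
  have o8: "F gd < F gb" if "irreducible R [gk,gd]" using ordF[OF eqw_sym[OF e_jb] _ that] by simp

  have q1: "irreducible R [gb,ga] \<or> irreducible R [ge,gd]"
    using class2[OF conv, of "{[gb,ga],[ge,gd]}" "[gb,ga]"] by (auto simp: defrel_def)
  have q2: "irreducible R [ge,ga] \<or> irreducible R [gf,gb]"
    using class2[OF conv, of "{[ge,ga],[gf,gb]}" "[ge,ga]"] by (auto simp: defrel_def)
  have q3: "irreducible R [gh,gb] \<or> irreducible R [gi,gd]"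
    using class2[OF conv, of "{[gh,gb],[gi,gd]}" "[gh,gb]"] by (auto simp: defrel_def)
  have q4: "irreducible R [gj,gb] \<or> irreducible R [gk,gd]"
    using class2[OF conv, of "{[gj,gb],[gk,gd]}" "[gj,gb]"] by (auto simp: defrel_def)
  have q5: "irreducible R [go,gi] \<or> irreducible R [gp,gk]"
    using class2[OF conv, of "{[go,gi],[gp,gk]}" "[go,gi]"] by (auto simp: defrel_def)
  have q6: "irreducible R [ge,gj] \<or> irreducible R [gp,gh]"
    using class2[OF conv, of "{[ge,gj],[gp,gh]}" "[ge,gj]"] by (auto simp: defrel_def)
  have q7: "irreducible R [gl,ge] \<or> irreducible R [ge,gk] \<or> irreducible R [gp,gi]"
    using class2[OF conv, of "{[gl,ge],[ge,gk],[gp,gi]}" "[gl,ge]"] by (auto simp: defrel_def)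

  have fr: "irreducible R [x,y]" if "\<forall>v. ([x,y],v) \<notin> defrel \<and> (v,[x,y]) \<notin> defrel" for x y
    using irr_free2[OF conv that] .
  have f_he: "irreducible R [gh,ge]" by (rule fr) (simp add: defrel_def)
  have f_da: "irreducible R [gd,ga]" by (rule fr) (simp add: defrel_def)
  have f_ne: "irreducible R [gn,ge]" by (rule fr) (simp add: defrel_def)
  have f_lb: "irreducible R [gl,gb]" by (rule fr) (simp add: defrel_def)
  have f_ka: "irreducible R [gk,ga]" by (rule fr) (simp add: defrel_def)
  have f_lf: "irreducible R [gl,gf]" by (rule fr) (simp add: defrel_def)
  have f_ia: "irreducible R [gi,ga]" by (rule fr) (simp add: defrel_def)

  have ex: False if "eqw u v" "u \<noteq> v" "irreducible R u" "irreducible R v" for u v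
    using conv_unique[OF conv that(1,3,4)] that(2) by simp
  note i3 = irr3[OF conv]

  have E1: False if "irreducible R [ge,gd]" "irreducible R [gi,gd]"
    by (rule ex[OF eq_hed_ida _ i3[OF f_he that(1)] i3[OF that(2) f_da]]) simp
  have X1: False if "irreducible R [ge,ga]" "irreducible R [go,gi]" "irreducible R [gi,gd]"
    by (rule ex[OF eq_nea_oid _ i3[OF f_ne that(1)] i3[OF that(2) that(3)]]) simp
  have X2: False if "irreducible R [ge,ga]" "irreducible R [gp,gk]" "irreducible R [gk,gd]"
    by (rule ex[OF eq_nea_pkd _ i3[OF f_ne that(1)] i3[OF that(2) that(3)]]) simp
  have Y1: False if "irreducible R [gb,ga]" "irreducible R [ge,gj]" "irreducible R [gj,gb]"
    by (rule ex[OF eqw_trans[OF eq_lba_led eq_led_ejb] _ i3[OF f_lb that(1)] i3[OF that(2) that(3)]]) simp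
  have Y2: False if "irreducible R [gb,ga]" "irreducible R [gp,gh]" "irreducible R [gh,gb]"
    by (rule ex[OF eqw_trans[OF eqw_trans[OF eq_lba_led eq_led_ejb] eq_ejb_phb] _ i3[OF f_lb that(1)] i3[OF that(2) that(3)]]) simp
  have Y3: False if "irreducible R [gl,ge]" "irreducible R [ge,gd]" "irreducible R [ge,gj]" "irreducible R [gj,gb]"
    by (rule ex[OF eq_led_ejb _ i3[OF that(1) that(2)] i3[OF that(3) that(4)]]) simp
  have Y4: False if "irreducible R [gl,ge]" "irreducible R [ge,gd]" "irreducible R [gp,gh]" "irreducible R [gh,gb]"
    by (rule ex[OF eqw_trans[OF eq_led_ejb eq_ejb_phb] _ i3[OF that(1) that(2)] i3[OF that(3) that(4)]]) simp
  have K1: False if "irreducible R [ge,gk]" "irreducible R [gf,gb]"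
    by (rule ex[OF eq_eka_lfb _ i3[OF that(1) f_ka] i3[OF f_lf that(2)]]) simp
  have K2: False if "irreducible R [gp,gi]" "irreducible R [gf,gb]"
    by (rule ex[OF eqw_trans[OF eq_pia_eka eq_eka_lfb] _ i3[OF that(1) f_ia] i3[OF f_lf that(2)]]) simp

  from q3 show False
  proof
    assume hb: "irreducible R [gh,gb]"
    have BD: "F gb < F gd" using o5[OF hb] .
    have jb: "irreducible R [gj,gb]" using q4 o8 BD by (meson less_asym)
    show False
    proof (cases "irreducible R [gb,ga]")
      case True
      then show False using q6 Y1[OF True _ jb] Y2[OF True _ hb] by blast
    next
      case False
      then have ed: "irreducible R [ge,gd]" using q1 by blast
      have DA: "F gd < F ga" using o2[OF ed] .
      have fb: "irreducible R [gf,gb]"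
        using q2 o3 BD DA by (meson less_asym less_trans)
      show False using q7 q6 Y3[OF _ ed _ jb] Y4[OF _ ed _ hb] K1[OF _ fb] K2[OF _ fb] by blast
    qed
  next
    assume id: "irreducible R [gi,gd]"
    have DB: "F gd < F gb" using o6[OF id] .
    have kd: "irreducible R [gk,gd]" using q4 o7 DB by (meson less_asym)
    have ba: "irreducible R [gb,ga]" using q1 E1[OF _ id] by blast
    have AD: "F ga < F gd" using o1[OF ba] .
    have ea: "irreducible R [ge,ga]" using q2 o4 AD DB by (meson less_asym less_trans)
    show False using q5 X1[OF ea _ id] X2[OF ea _ kd] by blast
  qed
qed



definition R0 :: "(word \<times> word) set" where
  "R0 = {([ge,gd],[gb,ga]), ([gf,gb],[ge,ga]), ([gi,gd],[gh,gb]), ([gj,gb],[gk,gd]), ([gp,gk],[go,gi]),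
         ([gp,gh],[ge,gj]), ([ge,gk],[gl,ge]), ([gp,gi],[gl,ge]), ([go,gh],[gn,gf]), ([gp,gj],[gn,gf])}"

abbreviation eqv :: "(word \<times> word) set \<Rightarrow> word \<Rightarrow> word \<Rightarrow> bool" where
  "eqv D \<equiv> (sup (rstep D) (rstep D)\<inverse>\<inverse>)\<^sup>*\<^sup>*"

lemma rstep_ctx: "rstep D a b \<Longrightarrow> rstep D (x @ a @ y) (x @ b @ y)"
  unfolding rstep_def by (metis append.assoc)

lemma rtr_ctx: "(rstep D)\<^sup>*\<^sup>* a b \<Longrightarrow> (rstep D)\<^sup>*\<^sup>* (x @ a @ y) (x @ b @ y)"
proof (induction rule: rtranclp_induct)
  case base then show ?case by simp
next
  case (step b c) then show ?case using rstep_ctx[OF step(2)] by (meson rtranclp.rtrancl_into_rtrancl)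
qed

lemma eqv_ctx: "eqv D a b \<Longrightarrow> eqv D (x @ a @ y) (x @ b @ y)"
proof (induction rule: rtranclp_induct)
  case base then show ?case by simp
next
  case (step b c)
  from step(2) have "sup (rstep D) (rstep D)\<inverse>\<inverse> (x @ b @ y) (x @ c @ y)"
    using rstep_ctx by fastforce
  then show ?case using step(3) by (meson rtranclp.rtrancl_into_rtrancl)
qed

lemma eqv_sym: "eqv D u v \<Longrightarrow> eqv D v u"
proof (induction rule: rtranclp_induct)
  case base then show ?case by simp
next
  case (step y z)
  then have "(sup (rstep D) (rstep D)\<inverse>\<inverse>) z y" by auto
  then show ?case using step(3) by (meson converse_rtranclp_into_rtranclp)
qed

lemma eqv_mono:
  assumes "\<forall>(l,r)\<in>D. eqv E l r" and "eqv D u v"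
  shows "eqv E u v"
  using assms(2)
proof (induction rule: rtranclp_induct)
  case base then show ?case by simp
next
  case (step b c)
  have "eqv E b c"
  proof (cases "rstep D b c")
    case True
    then obtain x y l r where "(l,r)\<in>D" "b = x@l@y" "c = x@r@y" unfolding rstep_def by blast
    then show ?thesis using assms(1) eqv_ctx by fastforce
  next
    case False
    then have "rstep D c b" using step(2) by auto
    then obtain x y l r where "(l,r)\<in>D" "c = x@l@y" "b = x@r@y" unfolding rstep_def by blast
    then show ?thesis using assms(1) eqv_ctx eqv_sym by fastforce
  qed
  then show ?case using step(3) by (meson rtranclp_trans)
qed

lemma st: "(l, r) \<in> D \<Longrightarrow> rstep D l r"
  unfolding rstep_def by (metis append_Nil append_Nil2)

lemma eqv_st: "(l, r) \<in> D \<Longrightarrow> eqv D l r"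
  using st by (metis (no_types, lifting) r_into_rtranclp sup2I1)

lemma eqv_st': "(r, l) \<in> D \<Longrightarrow> eqv D l r"
  using eqv_st eqv_sym by metis

lemma R0_eqw: "\<forall>(l,r)\<in>R0. eqv defrel l r"
proof -
  have a: "eqv defrel [gp,gi] [ge,gk]" by (rule eqv_st') (simp add: defrel_def)
  have b: "eqv defrel [ge,gk] [gl,ge]" by (rule eqv_st') (simp add: defrel_def)
  have c: "eqv defrel [gp,gj] [go,gh]" by (rule eqv_st') (simp add: defrel_def)
  have d: "eqv defrel [go,gh] [gn,gf]" by (rule eqv_st') (simp add: defrel_def)
  have e: "eqv defrel [gp,gi] [gl,ge]" using a b by (rule rtranclp_trans)
  have f: "eqv defrel [gp,gj] [gn,gf]" using c d by (rule rtranclp_trans)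
  have g1: "eqv defrel [ge,gd] [gb,ga]" by (rule eqv_st') (simp add: defrel_def)
  have g2: "eqv defrel [gf,gb] [ge,ga]" by (rule eqv_st') (simp add: defrel_def)
  have g3: "eqv defrel [gi,gd] [gh,gb]" by (rule eqv_st') (simp add: defrel_def)
  have g4: "eqv defrel [gj,gb] [gk,gd]" by (rule eqv_st) (simp add: defrel_def)
  have g5: "eqv defrel [gp,gk] [go,gi]" by (rule eqv_st') (simp add: defrel_def)
  have g6: "eqv defrel [gp,gh] [ge,gj]" by (rule eqv_st') (simp add: defrel_def)
  show ?thesis unfolding R0_def
    using e f b d g1 g2 g3 g4 g5 g6 by (simp only: ball_simps case_prod_conv)
qed

lemma defrel_R0: "\<forall>(l,r)\<in>defrel. eqv R0 l r"
proof -
  have a: "eqv R0 [ge,gk] [gl,ge]" by (rule eqv_st) (simp add: R0_def)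
  have b: "eqv R0 [gp,gi] [gl,ge]" by (rule eqv_st) (simp add: R0_def)
  have c: "eqv R0 [go,gh] [gn,gf]" by (rule eqv_st) (simp add: R0_def)
  have d: "eqv R0 [gp,gj] [gn,gf]" by (rule eqv_st) (simp add: R0_def)
  have e: "eqv R0 [ge,gk] [gp,gi]" using a eqv_sym[OF b] by (rule rtranclp_trans)
  have f: "eqv R0 [go,gh] [gp,gj]" using c eqv_sym[OF d] by (rule rtranclp_trans)
  have g1: "eqv R0 [gb,ga] [ge,gd]" by (rule eqv_st') (simp add: R0_def)
  have g2: "eqv R0 [ge,ga] [gf,gb]" by (rule eqv_st') (simp add: R0_def)
  have g3: "eqv R0 [gh,gb] [gi,gd]" by (rule eqv_st') (simp add: R0_def)
  have g4: "eqv R0 [gj,gb] [gk,gd]" by (rule eqv_st) (simp add: R0_def)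
  have g5: "eqv R0 [go,gi] [gp,gk]" by (rule eqv_st') (simp add: R0_def)
  have g6: "eqv R0 [ge,gj] [gp,gh]" by (rule eqv_st') (simp add: R0_def)
  have g7: "eqv R0 [gl,ge] [ge,gk]" using eqv_sym[OF a] .
  have g8: "eqv R0 [gn,gf] [go,gh]" using eqv_sym[OF c] .
  show ?thesis unfolding defrel_def
    using e f g1 g2 g3 g4 g5 g6 g7 g8 by (simp only: ball_simps case_prod_conv)
qed

lemma R0_equiv: "eqv R0 = eqw"
proof (intro ext iffI)
  fix u v
  show "eqv R0 u v \<Longrightarrow> eqw u v" unfolding eqw_def by (rule eqv_mono[OF R0_eqw])
  show "eqw u v \<Longrightarrow> eqv R0 u v" unfolding eqw_def by (rule eqv_mono[OF defrel_R0])
qed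

lemma R0_rules: "\<forall>(x, y)\<in>R0. length x = 2 \<and> length y = 2 \<and> x \<noteq> y \<and> eqw x y"
proof -
  have "\<forall>(x, y)\<in>R0. length x = 2 \<and> length y = 2 \<and> x \<noteq> y" by (simp add: R0_def)
  moreover have "\<forall>(x, y)\<in>R0. eqw x y" using R0_eqw unfolding eqw_def by blast
  ultimately show ?thesis by blast
qed

fun gw :: "gen \<Rightarrow> nat" where
  "gw ga = 0" | "gw gb = 1" | "gw gd = 1" | "gw ge = 1" | "gw gf = 1" | "gw gh = 1" | "gw gi = 2"
| "gw gj = 2" | "gw gk = 1" | "gw gl = 0" | "gw gn = 0" | "gw go = 1" | "gw gp = 3"

definition wt :: "word \<Rightarrow> nat" where "wt w = sum_list (map gw w)"

lemma R0_wt: "(l, r) \<in> R0 \<Longrightarrow> wt r < wt l"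
  by (auto simp: R0_def wt_def)

lemma R0_wf: "wfP (rstep R0)\<inverse>\<inverse>"
proof (rule wfp_if_convertible_to_nat[of _ wt])
  fix x y assume "(rstep R0)\<inverse>\<inverse> x y"
  then obtain a b l r where "(l,r)\<in>R0" "y = a@l@b" "x = a@r@b" unfolding rstep_def by auto
  then show "wt x < wt y" using R0_wt by (auto simp: wt_def)
qed

lemma newman:
  assumes wf: "wfP r\<inverse>\<inverse>"
    and lc: "\<And>a b c. r a b \<Longrightarrow> r a c \<Longrightarrow> \<exists>d. r\<^sup>*\<^sup>* b d \<and> r\<^sup>*\<^sup>* c d"
  shows "r\<^sup>*\<^sup>* a b \<Longrightarrow> r\<^sup>*\<^sup>* a c \<Longrightarrow> \<exists>d. r\<^sup>*\<^sup>* b d \<and> r\<^sup>*\<^sup>* c d"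
  using wf
proof (induction a arbitrary: b c rule: wfp_induct_rule)
  case (less a)
  show ?case
  proof (cases "b = a")
    case True then show ?thesis using less(3) by blast
  next
    case nb: False
    show ?thesis
    proof (cases "c = a")
      case True then show ?thesis using less(2) by blast
    next
      case nc: False
      obtain b1 where b1: "r a b1" "r\<^sup>*\<^sup>* b1 b" using less(2) nb by (metis converse_rtranclpE)
      obtain c1 where c1: "r a c1" "r\<^sup>*\<^sup>* c1 c" using less(3) nc by (metis converse_rtranclpE)
      obtain d1 where d1: "r\<^sup>*\<^sup>* b1 d1" "r\<^sup>*\<^sup>* c1 d1" using lc[OF b1(1) c1(1)] by blast
      obtain d2 where d2: "r\<^sup>*\<^sup>* b d2" "r\<^sup>*\<^sup>* d1 d2" using less(1)[of b1 b d1] b1 d1 by auto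
      have "r\<^sup>*\<^sup>* c1 d2" using d1(2) d2(2) by (rule rtranclp_trans)
      then obtain d3 where d3: "r\<^sup>*\<^sup>* c d3" "r\<^sup>*\<^sup>* d2 d3" using less(1)[of c1 c d2] c1 by auto
      have "r\<^sup>*\<^sup>* b d3" using d2(1) d3(2) by (rule rtranclp_trans)
      then show ?thesis using d3(1) by blast
    qed
  qed
qed

lemma R0_fun: "(l, r1) \<in> R0 \<Longrightarrow> (l, r2) \<in> R0 \<Longrightarrow> r1 = r2"
  by (auto simp: R0_def)

lemma R0_len: "(l, r) \<in> R0 \<Longrightarrow> length l = 2 \<and> length r = 2"
  by (auto simp: R0_def)

lemma s3L: "([p,q],[p',q']) \<in> R0 \<Longrightarrow> rstep R0 [p,q,s] [p',q',s]"
  using rstep_ctx[OF st, of "[p,q]" "[p',q']" R0 "[]" "[s]"] by simp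

lemma s3R: "([p,q],[p',q']) \<in> R0 \<Longrightarrow> rstep R0 [s,p,q] [s,p',q']"
  using rstep_ctx[OF st, of "[p,q]" "[p',q']" R0 "[s]" "[]"] by simp

lemma crit:
  assumes "([p,q],r1) \<in> R0" "([q,s],r2) \<in> R0"
  shows "\<exists>d. (rstep R0)\<^sup>*\<^sup>* (r1 @ [s]) d \<and> (rstep R0)\<^sup>*\<^sup>* (p # r2) d"
proof -
  have "(p = gp \<and> q = gi \<and> s = gd \<and> r1 = [gl,ge] \<and> r2 = [gh,gb]) \<or>
        (p = gp \<and> q = gj \<and> s = gb \<and> r1 = [gn,gf] \<and> r2 = [gk,gd])"
    using assms by (auto simp: R0_def)
  then show ?thesis
  proof
    assume h: "p = gp \<and> q = gi \<and> s = gd \<and> r1 = [gl,ge] \<and> r2 = [gh,gb]"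
    have 1: "rstep R0 [gl,ge,gd] [gl,gb,ga]" by (rule s3R) (simp add: R0_def)
    have 2: "rstep R0 [gp,gh,gb] [ge,gj,gb]" by (rule s3L) (simp add: R0_def)
    have 3: "rstep R0 [ge,gj,gb] [ge,gk,gd]" by (rule s3R) (simp add: R0_def)
    have 4: "rstep R0 [ge,gk,gd] [gl,ge,gd]" by (rule s3L) (simp add: R0_def)
    have "(rstep R0)\<^sup>*\<^sup>* [gp,gh,gb] [gl,gb,ga]" using 1 2 3 4
      by (meson converse_rtranclp_into_rtranclp r_into_rtranclp)
    then show ?thesis using h 1 by auto
  next
    assume h: "p = gp \<and> q = gj \<and> s = gb \<and> r1 = [gn,gf] \<and> r2 = [gk,gd]"
    have 1: "rstep R0 [gn,gf,gb] [gn,ge,ga]" by (rule s3R) (simp add: R0_def)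
    have 2: "rstep R0 [gp,gk,gd] [go,gi,gd]" by (rule s3L) (simp add: R0_def)
    have 3: "rstep R0 [go,gi,gd] [go,gh,gb]" by (rule s3R) (simp add: R0_def)
    have 4: "rstep R0 [go,gh,gb] [gn,gf,gb]" by (rule s3L) (simp add: R0_def)
    have "(rstep R0)\<^sup>*\<^sup>* [gp,gk,gd] [gn,ge,ga]" using 1 2 3 4
      by (meson converse_rtranclp_into_rtranclp r_into_rtranclp)
    then show ?thesis using h 1 by auto
  qed
qed

lemma lc_one:
  assumes m1: "(l1,r1) \<in> R0" and m2: "(l2,r2) \<in> R0" and eq: "l1 @ y1 = us @ l2 @ y2"
  shows "\<exists>d. (rstep R0)\<^sup>*\<^sup>* (x1 @ r1 @ y1) d \<and> (rstep R0)\<^sup>*\<^sup>* ((x1 @ us) @ r2 @ y2) d"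
proof -
  obtain a1 b1 where l1: "l1 = [a1,b1]" using R0_len[OF m1] len2 by blast
  obtain a2 b2 where l2: "l2 = [a2,b2]" using R0_len[OF m2] len2 by blast
  show ?thesis
  proof (cases us)
    case Nil
    then have "l1 = l2" "y1 = y2" using eq l1 l2 by auto
    then have "r1 = r2" using R0_fun m1 m2 by blast
    then show ?thesis using \<open>y1 = y2\<close> Nil by auto
  next
    case (Cons c us')
    show ?thesis
    proof (cases us')
      case Nil
      then have h: "c = a1" "b1 = a2" "y1 = b2 # y2" using eq l1 l2 Cons by auto
      obtain d where d: "(rstep R0)\<^sup>*\<^sup>* (r1 @ [b2]) d" "(rstep R0)\<^sup>*\<^sup>* (a1 # r2) d"
        using crit[of a1 b1 r1 b2 r2] m1 m2 l1 l2 h by auto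
      have "(rstep R0)\<^sup>*\<^sup>* (x1 @ (r1 @ [b2]) @ y2) (x1 @ d @ y2)" using rtr_ctx[OF d(1)] .
      moreover have "(rstep R0)\<^sup>*\<^sup>* (x1 @ (a1 # r2) @ y2) (x1 @ d @ y2)" using rtr_ctx[OF d(2)] .
      ultimately show ?thesis using h Cons Nil by auto
    next
      case (Cons c2 mm)
      then have h: "l1 = [c,c2]" "y1 = mm @ l2 @ y2" using eq l1 \<open>us = c # us'\<close> by auto
      have 1: "rstep R0 ((x1 @ r1 @ mm) @ l2 @ y2) ((x1 @ r1 @ mm) @ r2 @ y2)" by (rule rstep_ctx[OF st[OF m2]])
      have 2: "rstep R0 (x1 @ l1 @ (mm @ r2 @ y2)) (x1 @ r1 @ (mm @ r2 @ y2))" by (rule rstep_ctx[OF st[OF m1]])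
      show ?thesis
        apply (rule exI[of _ "x1 @ r1 @ mm @ r2 @ y2"])
        using 1 2 h \<open>us = c # us'\<close> Cons by auto
    qed
  qed
qed

lemma R0_lc: "rstep R0 u v \<Longrightarrow> rstep R0 u w \<Longrightarrow> \<exists>d. (rstep R0)\<^sup>*\<^sup>* v d \<and> (rstep R0)\<^sup>*\<^sup>* w d"
proof -
  assume "rstep R0 u v" "rstep R0 u w"
  then obtain x1 y1 l1 r1 x2 y2 l2 r2 where m1: "(l1,r1)\<in>R0" and u1: "u = x1@l1@y1" and v: "v = x1@r1@y1"
    and m2: "(l2,r2)\<in>R0" and u2: "u = x2@l2@y2" and w: "w = x2@r2@y2"
    unfolding rstep_def by blast
  from u1 u2 have "x1 @ (l1 @ y1) = x2 @ (l2 @ y2)" by simp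
  then obtain us where "(x1 = x2 @ us \<and> us @ l1 @ y1 = l2 @ y2) \<or> (x1 @ us = x2 \<and> l1 @ y1 = us @ l2 @ y2)"
    unfolding append_eq_append_conv2 by blast
  then show ?thesis
  proof
    assume h: "x1 = x2 @ us \<and> us @ l1 @ y1 = l2 @ y2"
    obtain d where "(rstep R0)\<^sup>*\<^sup>* (x2 @ r2 @ y2) d" "(rstep R0)\<^sup>*\<^sup>* ((x2 @ us) @ r1 @ y1) d"
      using lc_one[OF m2 m1, of y2 us y1 x2] h by metis
    then show ?thesis using v w h by auto
  next
    assume h: "x1 @ us = x2 \<and> l1 @ y1 = us @ l2 @ y2"
    then show ?thesis using lc_one[OF m1 m2, of y1 us y2 x1] v w by auto
  qed
qed

lemma part1: "convergent_orientation R0"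
  unfolding convergent_orientation_def
proof (intro conjI)
  show "\<forall>(x, y)\<in>R0. length x = 2 \<and> length y = 2 \<and> x \<noteq> y \<and> eqw x y" by (rule R0_rules)
  show "eqv R0 = eqw" by (rule R0_equiv)
  show "wfP (rstep R0)\<inverse>\<inverse>" by (rule R0_wf)
  show "\<forall>u v w. (rstep R0)\<^sup>*\<^sup>* u v \<and> (rstep R0)\<^sup>*\<^sup>* u w \<longrightarrow> (\<exists>t. (rstep R0)\<^sup>*\<^sup>* v t \<and> (rstep R0)\<^sup>*\<^sup>* w t)"
  proof (intro allI impI)
    fix u v w assume h: "(rstep R0)\<^sup>*\<^sup>* u v \<and> (rstep R0)\<^sup>*\<^sup>* u w"
    show "\<exists>t. (rstep R0)\<^sup>*\<^sup>* v t \<and> (rstep R0)\<^sup>*\<^sup>* w t"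
    proof (rule newman[of "rstep R0"])
      show "wfP (rstep R0)\<inverse>\<inverse>" by (rule R0_wf)
      show "\<And>a b c. rstep R0 a b \<Longrightarrow> rstep R0 a c \<Longrightarrow> \<exists>d. (rstep R0)\<^sup>*\<^sup>* b d \<and> (rstep R0)\<^sup>*\<^sup>* c d"
        by (rule R0_lc)
      show "(rstep R0)\<^sup>*\<^sup>* u v" using h by simp
      show "(rstep R0)\<^sup>*\<^sup>* u w" using h by simp
    qed
  qed
qed


theorem mainTheorem12:
  shows "(\<exists>R. convergent_orientation R) \<and>
    (\<forall>R. convergent_orientation R \<longrightarrow>
       \<not> (\<exists>lab :: nat \<Rightarrow> elem list \<Rightarrow> nat \<Rightarrow> 'l::order.
             (\<forall>dd. CL_labelling (Pi dd) (lab dd)) \<and> compatible_isos lab \<and>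
             minimal_chains_PBW R lab))"
proof (intro conjI allI impI notI)
  show "\<exists>R. convergent_orientation R" using part1 by blast
next
  fix R assume conv: "convergent_orientation R"
  assume "\<exists>lab :: nat \<Rightarrow> elem list \<Rightarrow> nat \<Rightarrow> 'l::order.
             (\<forall>dd. CL_labelling (Pi dd) (lab dd)) \<and> compatible_isos lab \<and>
             minimal_chains_PBW R lab"
  then obtain lab :: "nat \<Rightarrow> elem list \<Rightarrow> nat \<Rightarrow> 'l" where
    CL: "\<forall>dd. CL_labelling (Pi dd) (lab dd)" and pbw: "minimal_chains_PBW R lab" by blast
  have CL2: "CL_labelling (Pi 2) (lab 2)" using CL by blast
  show False
  proof (rule part2[OF conv CL2])
    fix w assume "length w = 2" "irreducible R w"
    then show "increasing (rlabs (Pi 2) (lab 2) [bot] (word_chain w))"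
      using pbw unfolding minimal_chains_PBW_def by blast
  qed
qed

end
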